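(* Let $i\ge 3$ and $k\ge 3$ be integers. Then: (a) $g_1(F_i,F_{i+2},F_{i+k})=(2F_i-1)F_{i+2}-F_i$ whenever $k\ge i+2$; (b) $g_1(F_i,F_{i+2},F_{2i+1})=(F_{i-2}-1)F_{i+2}+F_{2i+1}-F_i$; (c) $g_1(F_i,F_{i+2},F_{2i})=(F_i-1)F_{i+2}+F_{2i}-F_i$; (d) if $r=\lfloor (F_i-1)/F_k\rfloor\ge 1$ (equivalently $k\le i-1$), then $$g_1(F_i,F_{i+2},F_{i+k})=\begin{cases}(F_i-rF_k-1)F_{i+2}+(r+1)F_{i+k}-F_i & \text{if } (F_i-rF_k)F_{i+2}\ge F_{k-2}F_i,\\ (F_k-1)F_{i+2}+rF_{i+k}-F_i & \text{if } (F_i-rF_k)F_{i+2}< F_{k-2}F_i.\end{cases}$$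
   Context: Fibonacci numbers: $F_0=0$, $F_1=1$, $F_n=F_{n-1}+F_{n-2}$. For positive integers $a_1,\dots,a_l$ with $\gcd(a_1,\dots,a_l)=1$ and an integer $n$, let $d(n;a_1,\dots,a_l)$ be the number of tuples $(x_1,\dots,x_l)$ of nonnegative integers with $a_1x_1+\dots+a_lx_l=n$. For a nonnegative integer $p$, the $p$-Frobenius number $g_p(a_1,\dots,a_l)$ is the largest integer $n$ with $d(n;a_1,\dots,a_l)\le p$. *)

theory Defs
  imports "HOL-Number_Theory.Fib"
begin

definition num_reps :: "int \<Rightarrow> nat list \<Rightarrow> nat" where
  "num_reps n as = card {xs :: nat list. length xs = length as \<and>
      (\<Sum>j<length as. int (as ! j) * int (xs ! j)) = n}"

definition p_frobenius :: "nat \<Rightarrow> nat list \<Rightarrow> int" where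
  "p_frobenius p as = (GREATEST n :: int. num_reps n as \<le> p)"

end

theory Submission
  imports Defs "HOL-Number_Theory.Cong"
begin


definition reps3 :: "int \<Rightarrow> int \<Rightarrow> int \<Rightarrow> int \<Rightarrow> (nat \<times> nat \<times> nat) set" where
  "reps3 a b c n = {(x,y,z). a * int x + b * int y + c * int z = n}"

lemma l3: "length xs = 3 \<Longrightarrow> xs = [xs!0, xs!1, xs!2]"
  apply (rule nth_equalityI)
   apply (auto simp: less_Suc_eq numeral_3_eq_3 nth_Cons')
  by (metis numeral_2_eq_2)

lemma num_reps_reps3:
  "num_reps n [a,b,c] = card (reps3 (int a) (int b) (int c) n)"
proof -
  let ?L = "{xs :: nat list. length xs = length [a,b,c] \<and>
      (\<Sum>j<length [a,b,c]. int ([a,b,c] ! j) * int (xs ! j)) = n}"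
  let ?f = "\<lambda>xs::nat list. (xs!0, xs!1, xs!2)"
  have s3: "(\<Sum>j<length [a,b,c]. int ([a,b,c] ! j) * int (xs ! j)) = int a * int (xs!0) + int b * int (xs!1) + int c * int (xs!2)" for xs :: "nat list"
    apply (simp add: lessThan_Suc numeral_3_eq_3)
    by (metis numeral_2_eq_2)
  have "bij_betw ?f ?L (reps3 (int a) (int b) (int c) n)"
  proof (rule bij_betw_byWitness[where f' = "\<lambda>(x,y,z). [x,y,z]"])
    show "?f ` ?L \<subseteq> reps3 (int a) (int b) (int c) n"
    proof
      fix t assume "t \<in> ?f ` ?L"
      then obtain xs where xs: "xs \<in> ?L" "t = ?f xs" by blast
      then have "int a * int (xs!0) + int b * int (xs!1) + int c * int (xs!2) = n"
        using s3[of xs] by simp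
      then show "t \<in> reps3 (int a) (int b) (int c) n" using xs(2) unfolding reps3_def by simp
    qed
    show "(\<lambda>(x,y,z). [x,y,z]) ` reps3 (int a) (int b) (int c) n \<subseteq> ?L"
    proof
      fix xs assume "xs \<in> (\<lambda>(x,y,z). [x,y,z]) ` reps3 (int a) (int b) (int c) n"
      then obtain x y z where "xs = [x,y,z]" "(x,y,z) \<in> reps3 (int a) (int b) (int c) n" by auto
      then show "xs \<in> ?L" unfolding reps3_def using s3[of xs] by simp
    qed
    show "\<forall>xs\<in>?L. (\<lambda>(x,y,z). [x,y,z]) (?f xs) = xs"
    proof
      fix xs :: "nat list" assume "xs \<in> ?L"
      then have "length xs = 3" by simp
      then show "(\<lambda>(x,y,z). [x,y,z]) (?f xs) = xs"
        using l3[OF \<open>length xs = 3\<close>] by (metis case_prod_conv)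
    qed
    show "\<forall>t\<in>reps3 (int a) (int b) (int c) n. ?f ((\<lambda>(x,y,z). [x,y,z]) t) = t"
      by auto
  qed
  then show ?thesis unfolding num_reps_def by (simp add: bij_betw_same_card)
qed

lemma reps3_finite:
  assumes "a > 0" "b > 0" "c > 0"
  shows "finite (reps3 a b c n)"
proof -
  have "reps3 a b c n \<subseteq> {..nat n} \<times> {..nat n} \<times> {..nat n}"
  proof
    fix t assume "t \<in> reps3 a b c n"
    then obtain x y z where t: "t = (x,y,z)" and eq: "a * int x + b * int y + c * int z = n"
      by (auto simp: reps3_def)
    have "a * int x \<ge> int x" "b * int y \<ge> int y" "c * int z \<ge> int z"
      using assms by (simp_all add: mult_le_cancel_right1 )
    moreover have "a * int x \<ge> 0" "b * int y \<ge> 0" "c * int z \<ge> 0" using assms by simp_all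
    ultimately have "int x \<le> n" "int y \<le> n" "int z \<le> n" using eq by linarith+
    then show "t \<in> {..nat n} \<times> {..nat n} \<times> {..nat n}" using t by auto
  qed
  then show ?thesis by (rule finite_subset) auto
qed

lemma frob_char:
  assumes pos: "int a > 0" "int b > 0" "int c > 0"
    and low: "\<And>x y z. (x,y,z) \<in> reps3 (int a) (int b) (int c) G \<Longrightarrow> (x,y,z) = TT"
    and up: "\<And>n. n > G \<Longrightarrow> \<exists>u v. u \<in> reps3 (int a) (int b) (int c) n \<and>
                 v \<in> reps3 (int a) (int b) (int c) n \<and> u \<noteq> v"
  shows "p_frobenius 1 [a,b,c] = G"
  unfolding p_frobenius_def
proof (rule Greatest_equality)
  have "reps3 (int a) (int b) (int c) G \<subseteq> {TT}" using low by auto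
  then have "card (reps3 (int a) (int b) (int c) G) \<le> card {TT}"
    by (rule card_mono[rotated]) simp
  then have "card (reps3 (int a) (int b) (int c) G) \<le> 1" by simp
  then show "num_reps G [a, b, c] \<le> 1" by (simp add: num_reps_reps3)
next
  fix n assume le: "num_reps n [a, b, c] \<le> 1"
  show "n \<le> G"
  proof (rule ccontr)
    assume "\<not> n \<le> G"
    then have "G < n" by simp
    then obtain u v where uv: "u \<in> reps3 (int a) (int b) (int c) n"
       "v \<in> reps3 (int a) (int b) (int c) n" "u \<noteq> v" using up by blast
    have fin: "finite (reps3 (int a) (int b) (int c) n)" using pos by (rule reps3_finite)
    have "{u,v} \<subseteq> reps3 (int a) (int b) (int c) n" using uv by auto
    then have "card {u,v} \<le> card (reps3 (int a) (int b) (int c) n)" using fin by (rule card_mono[rotated])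
    then have "card (reps3 (int a) (int b) (int c) n) \<ge> 2" using uv(3) by simp
    then show False using le by (simp add: num_reps_reps3)
  qed
qed

lemma pair_rep:
  fixes a b c n y z :: int
  assumes "a > 0" "0 \<le> y" "0 \<le> z" "a dvd (b*y + c*z - n)" "b*y + c*z < n + a"
  shows "(nat ((n - b*y - c*z) div a), nat y, nat z) \<in> reps3 a b c n"
proof -
  obtain k where k: "b*y + c*z - n = a*k" using assms(4) by (auto simp: dvd_def)
  define m where "m = -k"
  have m: "n - b*y - c*z = a*m" using k unfolding m_def by (simp add: algebra_simps)
  have "a*m > -a" using m assms(5) by linarith
  then have "a*m > a*(-1)" by simp
  then have "m > -1" using assms(1) mult_less_cancel_left_pos by blast
  then have m0: "m \<ge> 0" by simp
  have "(n - b*y - c*z) div a = m" using m assms(1) by simp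
  then show ?thesis using m m0 assms(2,3) unfolding reps3_def by (simp add: algebra_simps)
qed

lemma upper_gen:
  fixes a b c G n :: int
  assumes a: "a > 0" and cop: "coprime b a"
  and H: "\<And>t. 0 \<le> t \<Longrightarrow> t < a \<Longrightarrow> \<exists>y1 z1 y2 z2. 0\<le>y1 \<and> 0\<le>z1 \<and> 0\<le>y2 \<and> 0\<le>z2 \<and>
      (y1,z1) \<noteq> (y2,z2) \<and> a dvd (b*y1 + c*z1 - b*t) \<and> a dvd (b*y2 + c*z2 - b*t) \<and>
      b*y1 + c*z1 \<le> G + a \<and> b*y2 + c*z2 \<le> G + a"
  and n: "n > G"
  shows "\<exists>u v. u \<in> reps3 a b c n \<and> v \<in> reps3 a b c n \<and> u \<noteq> v"
proof -
  obtain w where w: "[b * w = 1] (mod a)" using cong_solve_coprime_int[OF cop] by blast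
  define t where "t = (w*n) mod a"
  have t: "0 \<le> t" "t < a" using a by (simp_all add: t_def)
  have "[b*t = b*(w*n)] (mod a)" unfolding t_def by (simp add: cong_def mod_mult_right_eq)
  moreover have "[b*(w*n) = n] (mod a)" using cong_mult[OF w cong_refl[of n]] by (simp add: mult.assoc)
  ultimately have bt: "a dvd (b*t - n)" using cong_trans cong_iff_dvd_diff by blast
  obtain y1 z1 y2 z2 where P: "0\<le>y1" "0\<le>z1" "0\<le>y2" "0\<le>z2"
      "(y1,z1) \<noteq> (y2,z2)" "a dvd (b*y1 + c*z1 - b*t)" "a dvd (b*y2 + c*z2 - b*t)"
      "b*y1 + c*z1 \<le> G + a" "b*y2 + c*z2 \<le> G + a" using H[OF t] by blast
  have e1: "b*y1 + c*z1 - n = (b*y1 + c*z1 - b*t) + (b*t - n)" by simp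
  have d1: "a dvd (b*y1 + c*z1 - n)" unfolding e1 by (rule dvd_add[OF P(6) bt])
  have e2: "b*y2 + c*z2 - n = (b*y2 + c*z2 - b*t) + (b*t - n)" by simp
  have d2: "a dvd (b*y2 + c*z2 - n)" unfolding e2 by (rule dvd_add[OF P(7) bt])
  show ?thesis
    apply (rule exI, rule exI, intro conjI)
      apply (rule pair_rep[OF a P(1) P(2) d1])
    using P(8) n apply linarith
     apply (rule pair_rep[OF a P(3) P(4) d2])
    using P(9) n apply linarith
    using P(1-5) by auto
qed



lemma coprime_dvd_lin:
  fixes a b u v :: int
  assumes "coprime b a" "a * u = b * v"
  shows "a dvd v"
proof -
  have "a dvd b * v" using assms(2) by (metis dvd_triv_left)
  then show ?thesis using assms(1) by (simp add: coprime_commute coprime_dvd_mult_right_iff)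
qed

lemma partA:
  fixes a b c :: int
  assumes a: "a \<ge> 2" and ba: "b > a" and cop: "coprime b a"
    and cG: "c > (2*a-1)*b - a"
  shows "\<And>x y z. (x,y,z) \<in> reps3 a b c ((2*a-1)*b - a) \<Longrightarrow> (x,y,z) = (nat (b-1), nat (a-1), 0)"
    and "\<And>n. n > (2*a-1)*b - a \<Longrightarrow> \<exists>u v. u \<in> reps3 a b c n \<and> v \<in> reps3 a b c n \<and> u \<noteq> v"
proof -
  fix x y z assume "(x,y,z) \<in> reps3 a b c ((2*a-1)*b - a)"
  then have eq: "a * int x + b * int y + c * int z = (2*a-1)*b - a" by (simp add: reps3_def)
  have "a * int x \<ge> 0" "b * int y \<ge> 0" using a ba by simp_all
  have "(2*a-1)*b \<ge> 1*b" using a ba by (intro mult_right_mono) auto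
  then have c0: "c > 0" using cG ba by linarith
  have z0: "z = 0"
  proof (rule ccontr)
    assume "z \<noteq> 0"
    then have "c * int z \<ge> c * 1" using c0
      by (intro mult_left_mono) auto
    then show False using eq \<open>a * int x \<ge> 0\<close> \<open>b * int y \<ge> 0\<close> cG by linarith
  qed
  have e2: "a * (int x + 1) = b * (2*a - 1 - int y)" using eq z0 by (simp add: algebra_simps)
  then have "a dvd (2*a - 1 - int y)" using cop coprime_dvd_lin by blast
  then obtain m where m: "2*a - 1 - int y = a * m" by (auto simp: dvd_def)
  have "a * (int x + 1) > 0" using a by simp
  then have "b * (a*m) > 0" using e2 m by simp
  then have "a*m > 0" using ba a zero_less_mult_pos by fastforce
  then have m1: "m \<ge> 1" using a zero_less_mult_pos by fastforce
  have "a * m < a * 2" using m a by linarith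
  then have "m < 2" using a mult_less_cancel_left_pos by fastforce
  then have "m \<le> 1" by simp
  then have "m = 1" using m1 by simp
  then have y: "int y = a - 1" using m by simp
  then have "a * (int x + 1) = a * b" using e2 by (simp add: algebra_simps)
  then have "int x + 1 = b" using a by simp
  then show "(x,y,z) = (nat (b-1), nat (a-1), 0)" using y z0 by auto
next
  fix n assume n: "n > (2*a-1)*b - a"
  show "\<exists>u v. u \<in> reps3 a b c n \<and> v \<in> reps3 a b c n \<and> u \<noteq> v"
  proof (rule upper_gen[OF _ cop _ n])
    show "a > 0" using a by simp
    fix t assume t: "0 \<le> t" "t < a"
    have "b*t \<le> b*(a-1)" using t ba a by (intro mult_left_mono) auto
    moreover have "b*(a-1) \<le> b*(2*a-1)" using ba a by (intro mult_left_mono) auto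
    ultimately have h1: "b*t + c*0 \<le> (2*a-1)*b - a + a" by (simp add: mult.commute)
    have "b*(t+a) \<le> b*(2*a-1)" using t ba a by (intro mult_left_mono) auto
    then have h2: "b*(t+a) + c*0 \<le> (2*a-1)*b - a + a" by (simp add: mult.commute)
    have d1: "a dvd (b*t + c*0 - b*t)" by simp
    have d2: "a dvd (b*(t+a) + c*0 - b*t)" by (simp add: algebra_simps)
    have ne: "(t, 0::int) \<noteq> (t+a, 0)" using a by simp
    show "\<exists>y1 z1 y2 z2. 0\<le>y1 \<and> 0\<le>z1 \<and> 0\<le>y2 \<and> 0\<le>z2 \<and>
      (y1,z1) \<noteq> (y2,z2) \<and> a dvd (b*y1 + c*z1 - b*t) \<and> a dvd (b*y2 + c*z2 - b*t) \<and>
      b*y1 + c*z1 \<le> (2*a-1)*b - a + a \<and> b*y2 + c*z2 \<le> (2*a-1)*b - a + a"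
      apply (rule exI[of _ t], rule exI[of _ 0], rule exI[of _ "t+a"], rule exI[of _ 0])
      using t a h1 h2 d1 d2 ne by simp
  qed
qed



lemma coprime_dvd_lin'':
  fixes a b u v :: int
  assumes "coprime b a" "a * u = b * v"
  shows "a dvd v"
proof -
  have "a dvd b * v" using assms(2) by (metis dvd_triv_left)
  then show ?thesis using assms(1) by (simp add: coprime_commute coprime_dvd_mult_right_iff)
qed

lemma partB:
  fixes a b p c :: int
  assumes a: "a \<ge> 2" and ba: "b > a" and cop: "coprime b a" and p: "p \<ge> 1" "p < a"
    and pab: "p*a \<le> (a-p)*b" and c: "c = a*b + p*b - p*a"
  shows "\<And>x y z. (x,y,z) \<in> reps3 a b c ((2*a-1)*b - p*a - a) \<Longrightarrow> (x,y,z) = (nat (b-p-1), nat (a-1), 0)"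
    and "\<And>n. n > (2*a-1)*b - p*a - a \<Longrightarrow> \<exists>u v. u \<in> reps3 a b c n \<and> v \<in> reps3 a b c n \<and> u \<noteq> v"
proof -
  fix x y z assume "(x,y,z) \<in> reps3 a b c ((2*a-1)*b - p*a - a)"
  then have eq: "a * int x + b * int y + c * int z = (2*a-1)*b - p*a - a" by (simp add: reps3_def)
  have e2: "a * (int x + (b-p) * int z + p + 1) = b * (2*a - 1 - int y - p * int z)"
    using eq unfolding c by (simp add: algebra_simps)
  then have "a dvd (2*a - 1 - int y - p * int z)" using cop coprime_dvd_lin'' by blast
  then obtain m where m: "2*a - 1 - int y - p * int z = a * m" by (auto simp: dvd_def)
  have "(b-p) * int z \<ge> 0" using ba p by simp
  then have "a * (int x + (b-p) * int z + p + 1) > 0" using a p by simp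
  then have "b * (a*m) > 0" using e2 m by simp
  then have "a*m > 0" using ba a zero_less_mult_pos by fastforce
  then have m1: "m \<ge> 1" using a zero_less_mult_pos by fastforce
  have "p * int z \<ge> 0" using p by simp
  then have "a * m < a * 2" using m a by linarith
  then have "m < 2" using a mult_less_cancel_left_pos by fastforce
  then have "m = 1" using m1 by simp
  then have s: "int y + p * int z = a - 1" using m by simp
  then have "2*a - 1 - int y - p*int z = a" by linarith
  then have "a * (int x + (b-p) * int z + p + 1) = a * b" using e2 by (simp add: mult.commute)
  then have e3: "int x + (b-p) * int z + p + 1 = b" using a by simp
  have z0: "z = 0"
  proof (rule ccontr)
    assume "z \<noteq> 0"
    then have "(b-p) * int z \<ge> (b-p) * 1" using ba p by (intro mult_left_mono) auto
    then show False using e3 by simp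
  qed
  then show "(x,y,z) = (nat (b-p-1), nat (a-1), 0)" using s e3 by auto
next
  fix n assume n: "n > (2*a-1)*b - p*a - a"
  show "\<exists>u v. u \<in> reps3 a b c n \<and> v \<in> reps3 a b c n \<and> u \<noteq> v"
  proof (rule upper_gen[OF _ cop _ n])
    show "a > 0" using a by simp
    fix t assume t: "0 \<le> t" "t < a"
    have pab': "a*p + b*p \<le> a*b" using pab by (simp add: algebra_simps)
    have bp: "b*p \<ge> 0" "a*p \<ge> 0" using p ba a by simp_all
    show "\<exists>y1 z1 y2 z2. 0\<le>y1 \<and> 0\<le>z1 \<and> 0\<le>y2 \<and> 0\<le>z2 \<and>
      (y1,z1) \<noteq> (y2,z2) \<and> a dvd (b*y1 + c*z1 - b*t) \<and> a dvd (b*y2 + c*z2 - b*t) \<and>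
      b*y1 + c*z1 \<le> (2*a-1)*b - p*a - a + a \<and> b*y2 + c*z2 \<le> (2*a-1)*b - p*a - a + a"
    proof (cases "t \<ge> p")
      case True
      have "b*t \<le> b*(a-1)" using t ba a by (intro mult_left_mono) auto
      moreover have "b*(a-1) = a*b - b" by (simp add: algebra_simps)
      moreover have "(2*a-1)*b = 2*(a*b) - b" by (simp add: algebra_simps)
      moreover have "b*(t-p) + c*1 = b*t + a*b - p*a" unfolding c by (simp add: algebra_simps)
      moreover have "b*(a-1) \<le> (2*a-1)*b - p*a" using pab' bp by (simp add: algebra_simps)
      ultimately have h1: "b*t + c*0 \<le> (2*a-1)*b - p*a - a + a"
          "b*(t-p) + c*1 \<le> (2*a-1)*b - p*a - a + a" by (smt (verit))+
      have d1: "a dvd (b*t + c*0 - b*t)" by simp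
      have "b*(t-p) + c*1 - b*t = a*(b-p)" unfolding c by (simp add: algebra_simps)
      then have d2: "a dvd (b*(t-p) + c*1 - b*t)" by simp
      show ?thesis
        apply (rule exI[of _ t], rule exI[of _ 0], rule exI[of _ "t-p"], rule exI[of _ 1])
        using t True h1 d1 d2 by simp
    next
      case False
      have "b*t \<le> b*(a-1)" using t ba a by (intro mult_left_mono) auto
      moreover have "b*(t+a) \<le> b*(p-1+a)" using t False ba a by (intro mult_left_mono) auto
      moreover have "b*(p-1+a) \<le> (2*a-1)*b - p*a" using pab by (simp add: algebra_simps)
      moreover have "b*(a-1) \<le> (2*a-1)*b - p*a" using pab' bp by (simp add: algebra_simps)
      ultimately have h1: "b*t + c*0 \<le> (2*a-1)*b - p*a - a + a"
          "b*(t+a) + c*0 \<le> (2*a-1)*b - p*a - a + a" by (smt (verit))+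
      have d1: "a dvd (b*t + c*0 - b*t)" "a dvd (b*(t+a) + c*0 - b*t)" by (simp_all add: algebra_simps)
      show ?thesis
        apply (rule exI[of _ t], rule exI[of _ 0], rule exI[of _ "t+a"], rule exI[of _ 0])
        using t a h1 d1 by simp
    qed
  qed
qed



lemma coprime_dvd_lin':
  fixes a b u v :: int
  assumes "coprime b a" "a * u = b * v"
  shows "a dvd v"
proof -
  have "a dvd b * v" using assms(2) by (metis dvd_triv_left)
  then show ?thesis using assms(1) by (simp add: coprime_commute coprime_dvd_mult_right_iff)
qed

lemma partC:
  fixes a b h :: int
  assumes a: "a \<ge> 2" and ba: "b > a" and cop: "coprime b a" and h: "h \<ge> 1" "h < b"
  shows "\<And>x y z. (x,y,z) \<in> reps3 a b (a*h) ((a-1)*b + a*h - a) \<Longrightarrow> (x,y,z) = (nat (h-1), nat (a-1), 0)"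
    and "\<And>n. n > (a-1)*b + a*h - a \<Longrightarrow> \<exists>u v. u \<in> reps3 a b (a*h) n \<and> v \<in> reps3 a b (a*h) n \<and> u \<noteq> v"
proof -
  fix x y z assume "(x,y,z) \<in> reps3 a b (a*h) ((a-1)*b + a*h - a)"
  then have eq: "a * int x + b * int y + (a*h) * int z = (a-1)*b + a*h - a" by (simp add: reps3_def)
  have nn: "a * int x \<ge> 0" "b * int y \<ge> 0" "(a*h) * int z \<ge> 0" using a ba h by simp_all
  have e2: "a * (int x + h * int z - h + 1) = b * (a - 1 - int y)" using eq by (simp add: algebra_simps)
  then have "a dvd (a - 1 - int y)" using cop coprime_dvd_lin' by blast
  then obtain m where m: "a - 1 - int y = a * m" by (auto simp: dvd_def)
  have "a * m < a * 1" using m a by linarith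
  then have "m < 1" using a mult_less_cancel_left_pos by fastforce
  have m0: "m = 0"
  proof (rule ccontr)
    assume "m \<noteq> 0"
    then have "m \<le> -1" using \<open>m < 1\<close> by simp
    then have "a * m \<le> a * (-1)" using a by (intro mult_left_mono) auto
    then have "int y \<ge> 2*a - 1" using m by linarith
    then have "b * int y \<ge> b * (2*a-1)" using ba a by (intro mult_left_mono) auto
    moreover have "a*h < a*b" using h a by simp
    moreover have "b*(2*a-1) = 2*(a*b) - b" by (simp add: algebra_simps)
    moreover have "(a-1)*b = a*b - b" by (simp add: algebra_simps)
    ultimately show False using eq nn a by (smt (verit))
  qed
  then have y: "int y = a - 1" using m by simp
  then have e3: "int x + h * int z = h - 1" using e2 a by simp
  have z0: "z = 0"
  proof (rule ccontr)
    assume "z \<noteq> 0"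
    then have "h * int z \<ge> h * 1" using h by (intro mult_left_mono) auto
    then show False using e3 by simp
  qed
  then show "(x,y,z) = (nat (h-1), nat (a-1), 0)" using y e3 by auto
next
  fix n assume n: "n > (a-1)*b + a*h - a"
  show "\<exists>u v. u \<in> reps3 a b (a*h) n \<and> v \<in> reps3 a b (a*h) n \<and> u \<noteq> v"
  proof (rule upper_gen[OF _ cop _ n])
    show "a > 0" using a by simp
    fix t assume t: "0 \<le> t" "t < a"
    have "b*t \<le> b*(a-1)" using t ba a by (intro mult_left_mono) auto
    moreover have "a*h \<ge> 0" using a h by simp
    moreover have "(a-1)*b = b*(a-1)" by (simp add: mult.commute)
    ultimately have h1: "b*t + (a*h)*0 \<le> (a-1)*b + a*h - a + a" "b*t + (a*h)*1 \<le> (a-1)*b + a*h - a + a"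
      by linarith+
    have d1: "a dvd (b*t + (a*h)*0 - b*t)" "a dvd (b*t + (a*h)*1 - b*t)" by simp_all
    show "\<exists>y1 z1 y2 z2. 0\<le>y1 \<and> 0\<le>z1 \<and> 0\<le>y2 \<and> 0\<le>z2 \<and>
      (y1,z1) \<noteq> (y2,z2) \<and> a dvd (b*y1 + (a*h)*z1 - b*t) \<and> a dvd (b*y2 + (a*h)*z2 - b*t) \<and>
      b*y1 + (a*h)*z1 \<le> (a-1)*b + a*h - a + a \<and> b*y2 + (a*h)*z2 \<le> (a-1)*b + a*h - a + a"
      apply (rule exI[of _ t], rule exI[of _ 0], rule exI[of _ t], rule exI[of _ 1])
      using t h1 d1 by simp
  qed
qed



lemma coprime_dvd_lin3:
  fixes a b u v :: int
  assumes "coprime b a" "a * u = b * v"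
  shows "a dvd v"
proof -
  have "a dvd b * v" using assms(2) by (metis dvd_triv_left)
  then show ?thesis using assms(1) by (simp add: coprime_commute coprime_dvd_mult_right_iff)
qed

locale PDsetup =
  fixes a b f e r c :: int
  assumes a: "a \<ge> 2" and bae: "b \<ge> a + e + 1" and cop: "coprime b a" and e: "e \<ge> 1"
    and fe: "f \<ge> 2*e" and fa: "f \<le> a - 1" and r: "r = (a-1) div f" and r1: "r \<ge> 1"
    and c: "c = f*b - e*a"
begin

lemma f2: "f \<ge> 2" using fe e by simp
lemma ba: "b > a" using bae e by simp

lemma rf: "r*f \<le> a - 1" "(r+1)*f \<ge> a"
proof -
  have d: "a - 1 = f * r + (a-1) mod f" using r by simp
  have "(a-1) mod f \<ge> 0" "(a-1) mod f < f" using f2 by simp_all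
  then show "r*f \<le> a - 1" "(r+1)*f \<ge> a" using d by (simp_all add: algebra_simps)
qed

lemma cpos: "c > e*f"
proof -
  have "f*b \<ge> f*(a+e+1)" using bae f2 by (intro mult_left_mono) auto
  moreover have "(f-e)*a \<ge> 0" using fe e a by simp
  moreover have "f*(a+e+1) = f*a + f*e + f" "(f-e)*a = f*a - e*a" by (simp_all add: algebra_simps)
  moreover have "e*f = f*e" by simp
  ultimately show ?thesis unfolding c using f2 by linarith
qed

lemma cea: "c \<ge> e*a"
proof -
  have "f*b \<ge> (2*e)*b" using fe ba a by (intro mult_right_mono) auto
  moreover have "e*b \<ge> e*a" using e ba by (intro mult_left_mono) auto
  ultimately show ?thesis unfolding c by (simp add: algebra_simps)
qed

definition "V1 = (a-1+f)*b - (r+1)*e*a"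
definition "V2 = ((r+1)*f-1)*b - r*e*a"

lemma key_contra:
  fixes j z :: int
  assumes j: "j \<ge> 1" and ez: "e*z \<ge> K + 1 + b*j" and fz: "f*z \<le> L + a*j"
    and KL: "f*K \<ge> e*L - e*f"
  shows False
proof -
  have h3: "f*(e*z) \<ge> f*(K + 1 + b*j)" using ez f2 by (intro mult_left_mono) auto
  have h4: "e*(f*z) \<le> e*(L + a*j)" using fz e by (intro mult_left_mono) auto
  have "e*f \<ge> 0" using e f2 by simp
  then have h6: "j*c \<ge> 1*c" using j cpos by (intro mult_right_mono) auto
  have "f*(K + 1 + b*j) = f*K + f + j*(f*b)" by (simp add: algebra_simps)
  moreover have "e*(L + a*j) = e*L + j*(e*a)" by (simp add: algebra_simps)
  moreover have "j*c = j*(f*b) - j*(e*a)" unfolding c by (simp add: algebra_simps)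
  moreover have "f*(e*z) = e*(f*z)" by (simp add: algebra_simps)
  ultimately show False using h3 h4 h6 KL cpos f2 by linarith
qed

lemma low1:
  assumes "(x,y,z) \<in> reps3 a b c (V1 - a)"
  shows "(x,y,z) = (nat (b - (r+1)*e - 1), nat (f-1), 0)"
proof -
  have eq: "a * int x + b * int y + c * int z = V1 - a" using assms by (simp add: reps3_def)
  have e2: "a * (int x - e*int z + (r+1)*e + 1) = b * (a - 1 + f - (int y + f*int z))"
    using eq unfolding c V1_def by (simp add: algebra_simps)
  then have "a dvd (a - 1 + f - (int y + f*int z))" using cop coprime_dvd_lin3 by blast
  then obtain m where m: "a - 1 + f - (int y + f*int z) = a * m" by (auto simp: dvd_def)
  then have "a * (int x - e*int z + (r+1)*e + 1) = a * (b*m)" using e2 by (simp add: algebra_simps)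
  then have xm: "int x - e*int z + (r+1)*e + 1 = b*m" using a by simp
  have y0: "int y \<ge> 0" "int x \<ge> 0" "int z \<ge> 0" by simp_all
  consider "m \<le> -1" | "m = 0" | "m = 1" | "m \<ge> 2" by linarith
  then show ?thesis
  proof cases
    case 1
    define j where "j = -m"
    have j: "j \<ge> 1" using 1 j_def by simp
    have "e*int z \<ge> (r+1)*e + 1 + b*j" using xm y0 unfolding j_def by (simp add: algebra_simps)
    moreover have "f*int z \<le> (a - 1 + f) + a*j" using m y0 unfolding j_def by (simp add: algebra_simps)
    moreover have "f*((r+1)*e) \<ge> e*(a-1+f) - e*f"
    proof -
      have "e*((r+1)*f) \<ge> e*(a-1)" using rf e by (intro mult_left_mono) auto
      then show ?thesis by (simp add: algebra_simps)
    qed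
    ultimately show ?thesis using key_contra[OF j] by blast
  next
    case 2
    then have "e*int z \<ge> e*(r+1) + 1" using xm y0 by (simp add: algebra_simps)
    then have "e*int z > e*(r+1)" by simp
    then have "int z > r+1" using e mult_less_cancel_left_pos by fastforce
    then have "int z \<ge> r+2" by simp
    then have "f*int z \<ge> f*(r+2)" using f2 by (intro mult_left_mono) auto
    moreover have "f*(r+2) = (r+1)*f + f" by (simp add: algebra_simps)
    moreover have "a*m = 0" using 2 by simp
    ultimately have False using m y0 rf by linarith
    then show ?thesis ..
  next
    case 3
    then have s: "int y + f*int z = f - 1" using m by simp
    have z0: "z = 0"
    proof (rule ccontr)
      assume "z \<noteq> 0"
      then have "f*int z \<ge> f*1" using f2 by (intro mult_left_mono) auto
      then show False using s y0 by simp
    qed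
    then show ?thesis using s xm 3 by auto
  next
    case 4
    then have "a*m \<ge> a*2" using a by (intro mult_left_mono) auto
    moreover have "f*int z \<ge> 0" using f2 by simp
    ultimately have False using m y0 fa by linarith
    then show ?thesis ..
  qed
qed

lemma low2:
  assumes "(x,y,z) \<in> reps3 a b c (V2 - a)"
  shows "(x,y,z) = (nat (b - r*e - 1), nat ((r+1)*f - 1 - a), 0)"
proof -
  have eq: "a * int x + b * int y + c * int z = V2 - a" using assms by (simp add: reps3_def)
  have e2: "a * (int x - e*int z + r*e + 1) = b * ((r+1)*f - 1 - (int y + f*int z))"
    using eq unfolding c V2_def by (simp add: algebra_simps)
  then have "a dvd ((r+1)*f - 1 - (int y + f*int z))" using cop coprime_dvd_lin3 by blast
  then obtain m where m: "(r+1)*f - 1 - (int y + f*int z) = a * m" by (auto simp: dvd_def)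
  then have "a * (int x - e*int z + r*e + 1) = a * (b*m)" using e2 by (simp add: algebra_simps)
  then have xm: "int x - e*int z + r*e + 1 = b*m" using a by simp
  have y0: "int y \<ge> 0" "int x \<ge> 0" "int z \<ge> 0" by simp_all
  consider "m \<le> -1" | "m = 0" | "m = 1" | "m \<ge> 2" by linarith
  then show ?thesis
  proof cases
    case 1
    define j where "j = -m"
    have j: "j \<ge> 1" using 1 j_def by simp
    have "e*int z \<ge> r*e + 1 + b*j" using xm y0 unfolding j_def by (simp add: algebra_simps)
    moreover have "f*int z \<le> ((r+1)*f - 1) + a*j" using m y0 unfolding j_def by (simp add: algebra_simps)
    moreover have "f*(r*e) \<ge> e*((r+1)*f - 1) - e*f" using e by (simp add: algebra_simps)
    ultimately show ?thesis using key_contra[OF j] by blast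
  next
    case 2
    then have "f*int z < f*(r+1)" using m y0 by (simp add: algebra_simps)
    then have "int z < r+1" using f2 mult_less_cancel_left_pos by fastforce
    then have "e*int z \<le> e*r" using e by (intro mult_left_mono) auto
    then have False using xm 2 y0 by (simp add: algebra_simps)
    then show ?thesis ..
  next
    case 3
    then have s: "int y + f*int z = (r+1)*f - 1 - a" using m by simp
    have z0: "z = 0"
    proof (rule ccontr)
      assume "z \<noteq> 0"
      then have "f*int z \<ge> f*1" using f2 by (intro mult_left_mono) auto
      moreover have "(r+1)*f = r*f + f" by (simp add: algebra_simps)
      ultimately show False using s y0 rf by linarith
    qed
    then show ?thesis using s xm 3 by auto
  next
    case 4
    then have "a*m \<ge> a*2" using a by (intro mult_left_mono) auto
    moreover have "f*int z \<ge> 0" using f2 by simp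
    moreover have "(r+1)*f = r*f + f" by (simp add: algebra_simps)
    ultimately have False using m y0 fa rf by linarith
    then show ?thesis ..
  qed
qed

lemma up:
  assumes n: "n > max V1 V2 - a"
  shows "\<exists>u v. u \<in> reps3 a b c n \<and> v \<in> reps3 a b c n \<and> u \<noteq> v"
proof (rule upper_gen[OF _ cop _ n])
  show "a > 0" using a by simp
  fix t assume t: "0 \<le> t" "t < a"
  define q where "q = t div f"
  have tq: "t = f*q + t mod f" "t mod f \<ge> 0" "t mod f < f" using f2 unfolding q_def by simp_all
  have q0: "q \<ge> 0" using t f2 unfolding q_def by (simp add: pos_imp_zdiv_nonneg_iff)
  have qr: "q \<le> r" unfolding q_def r using t f2 by (intro zdiv_mono1) auto
  have ea0: "e*a \<ge> 0" using e a by simp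
  have cdef: "c = f*b - e*a" by (rule c)
  show "\<exists>y1 z1 y2 z2. 0\<le>y1 \<and> 0\<le>z1 \<and> 0\<le>y2 \<and> 0\<le>z2 \<and>
      (y1,z1) \<noteq> (y2,z2) \<and> a dvd (b*y1 + c*z1 - b*t) \<and> a dvd (b*y2 + c*z2 - b*t) \<and>
      b*y1 + c*z1 \<le> max V1 V2 - a + a \<and> b*y2 + c*z2 \<le> max V1 V2 - a + a"
  proof (cases "q \<ge> 1")
    case True
    define y1 where "y1 = t - f*q"
    define y2 where "y2 = t - f*(q-1)"
    have v1: "b*y1 + c*q = b*t - e*a*q" unfolding y1_def cdef by (simp add: algebra_simps)
    have v2: "b*y2 + c*(q-1) = b*t - e*a*(q-1)" unfolding y2_def cdef by (simp add: algebra_simps)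
    have "t \<le> f*q + f - 1" using tq by linarith
    then have bt: "b*t \<le> b*(f*q + f - 1)" using ba a by (intro mult_left_mono) auto
    have bound: "b*t - e*a*(q-1) \<le> max V1 V2"
    proof (cases "q = r")
      case True
      have "b*t \<le> b*(a-1)" using t ba a by (intro mult_left_mono) auto
      moreover have "f*b \<ge> 2*(e*a)" using cea unfolding cdef by (simp add: mult.commute)
      moreover have "V1 = b*(a-1) + f*b - (r+1)*e*a" unfolding V1_def by (simp add: algebra_simps)
      moreover have "(r+1)*e*a = e*a*(r-1) + 2*(e*a)" by (simp add: algebra_simps)
      moreover have "e*a*(q-1) = e*a*(r-1)" using True by simp
      ultimately have "b*t - e*a*(q-1) \<le> V1" by linarith
      then show ?thesis by simp
    next
      case False
      then have rq: "r - q \<ge> 1" using qr by simp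
      have "c \<ge> 0" using cea ea0 by simp
      then have "(r-q)*c \<ge> 1*c" using rq by (intro mult_right_mono) auto
      moreover have "V2 - b*(f*q + f - 1) + e*a*(q-1) = (r-q)*c - e*a"
        unfolding V2_def cdef by (simp add: algebra_simps)
      ultimately have "b*t - e*a*(q-1) \<le> V2" using bt cea by linarith
      then show ?thesis by simp
    qed
    have "e*a*(q-1) \<le> e*a*q" using ea0 by (intro mult_left_mono) auto
    then have b1: "b*y1 + c*q \<le> max V1 V2 - a + a" "b*y2 + c*(q-1) \<le> max V1 V2 - a + a"
      using v1 v2 bound by linarith+
    have "b*y1 + c*q - b*t = a*(-(e*q))" using v1 by (simp add: algebra_simps)
    then have d1: "a dvd (b*y1 + c*q - b*t)" by (metis dvd_triv_left)
    have "b*y2 + c*(q-1) - b*t = a*(-(e*(q-1)))" using v2 by (simp add: algebra_simps)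
    then have d2: "a dvd (b*y2 + c*(q-1) - b*t)" by (metis dvd_triv_left)
    have nn: "0 \<le> y1" "0 \<le> y2" unfolding y1_def y2_def using tq by (simp_all add: algebra_simps)
    show ?thesis
      apply (rule exI[of _ y1], rule exI[of _ q], rule exI[of _ y2], rule exI[of _ "q-1"])
      using nn True b1 d1 d2 by simp
  next
    case False
    then have q00: "q = 0" using q0 by simp
    then have tf: "t \<le> f - 1" using tq by simp
    define z2 where "z2 = (if t + a \<ge> (r+1)*f then r+1 else r)"
    define y2 where "y2 = t + a - f*z2"
    have y2: "y2 \<ge> 0"
    proof (cases "t + a \<ge> (r+1)*f")
      case True then show ?thesis unfolding y2_def z2_def by (simp add: algebra_simps)
    next
      case False then show ?thesis unfolding y2_def z2_def using rf t by (simp add: algebra_simps)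
    qed
    have v2: "b*y2 + c*z2 = b*(t+a) - e*a*z2" unfolding y2_def cdef by (simp add: algebra_simps)
    have b2: "b*(t+a) - e*a*z2 \<le> max V1 V2"
    proof (cases "t + a \<ge> (r+1)*f")
      case True
      have "b*(t+a) \<le> b*(a-1+f)" using tf ba a by (intro mult_left_mono) auto
      then have "b*(t+a) - e*a*z2 \<le> V1" unfolding V1_def z2_def using True
        by (simp add: algebra_simps)
      then show ?thesis by simp
    next
      case False
      then have "t + a \<le> (r+1)*f - 1" by simp
      then have "b*(t+a) \<le> b*((r+1)*f - 1)" using ba a by (intro mult_left_mono) auto
      then have "b*(t+a) - e*a*z2 \<le> V2" unfolding V2_def z2_def using False
        by (simp add: algebra_simps)
      then show ?thesis by simp
    qed
    have b1: "b*t \<le> V2"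
    proof -
      have "b*t \<le> b*(f-1)" using tf ba a by (intro mult_left_mono) auto
      moreover have "c \<ge> 0" using cea ea0 by simp
      then have "r*c \<ge> 0" using r1 by simp
      moreover have "V2 = b*(f-1) + r*c" unfolding V2_def cdef by (simp add: algebra_simps)
      ultimately show ?thesis by linarith
    qed
    have "b*y2 + c*z2 - b*t = a*(b - e*z2)" using v2 by (simp add: algebra_simps)
    then have d2: "a dvd (b*y2 + c*z2 - b*t)" by (metis dvd_triv_left)
    have z2: "z2 \<ge> 1" unfolding z2_def using r1 by simp
    have bb1: "b*t + c*0 \<le> max V1 V2 - a + a" using b1 by simp
    have bb2: "b*y2 + c*z2 \<le> max V1 V2 - a + a" using b2 v2 by simp
    show ?thesis
      apply (rule exI[of _ t], rule exI[of _ 0], rule exI[of _ y2], rule exI[of _ z2])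
      using t y2 z2 bb1 bb2 d2 by simp
  qed
qed

end



lemma shift_alg:
  fixes X F2 F1 F0 U2 U1 U0 :: nat
  assumes "X = F2*U1 + F1*U0" "U2 = U1 + U0" "F2 = F1 + F0"
  shows "int X = int F2 * int U2 - int F0 * int U0"
  using assms by (simp add: algebra_simps)

lemma fib_shift:
  assumes "k \<ge> 2"
  shows "int (fib (i+k)) = int (fib k) * int (fib (i+2)) - int (fib (k-2)) * int (fib i)"
proof -
  obtain k' where k: "k = k' + 2" using assms by (metis add.commute le_Suc_ex)
  have A: "fib (i+k) = fib (k'+2) * fib (i+1) + fib (k'+1) * fib i"
    using fib_add[of i "k'+1"] unfolding k by (simp add: algebra_simps)
  have B: "fib (i+2) = fib (i+1) + fib i" by (rule fib_plus_2)
  have C: "fib (k'+2) = fib (k'+1) + fib k'" by (rule fib_plus_2)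
  have "int (fib (i+k)) = int (fib (k'+2)) * int (fib (i+2)) - int (fib k') * int (fib i)"
    by (rule shift_alg[OF A B C])
  then show ?thesis unfolding k by simp
qed

lemma fib_ge2: "i \<ge> 3 \<Longrightarrow> fib i \<ge> 2"
  using fib_mono[of 3 i] by (simp add: numeral_3_eq_3)

lemma fib_pos: "i \<ge> 1 \<Longrightarrow> fib i \<ge> 1"
  using fib_neq_0_nat[of i] by simp

lemma cop_fib: "coprime (int (fib (i+2))) (int (fib i))"
proof -
  have "gcd (fib i) (fib (2 + i)) = gcd (fib i) (fib 2)" by (rule gcd_fib_add)
  then have "coprime (fib i) (fib (i+2))" by (simp add: coprime_iff_gcd_eq_1 add.commute)
  then have "coprime (fib (i+2)) (fib i)" by (simp add: coprime_commute)
  then show ?thesis by (simp only: coprime_int_iff)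
qed



lemma fibs3: "fib (m+3) = fib (m+1) + fib (m+2)" "fib (m+3+1) = fib(m+1) + 2*fib(m+2)"
   "fib (m+3+2) = 2*fib (m+1) + 3*fib (m+2)"
  by (simp_all add: eval_nat_numeral)

theorem theorem2:
  fixes i k :: nat
  assumes "i \<ge> 3" and "k \<ge> 3"
  defines "F \<equiv> \<lambda>j. int (fib j)"
  shows
    "(k \<ge> i + 2 \<longrightarrow>
       p_frobenius 1 [fib i, fib (i+2), fib (i+k)] = (2 * F i - 1) * F (i+2) - F i)
   \<and> p_frobenius 1 [fib i, fib (i+2), fib (2*i+1)]
       = (F (i-2) - 1) * F (i+2) + F (2*i+1) - F i
   \<and> p_frobenius 1 [fib i, fib (i+2), fib (2*i)]
       = (F i - 1) * F (i+2) + F (2*i) - F i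
   \<and> (\<forall>r::int. r = (F i - 1) div F k \<longrightarrow> r \<ge> 1 \<longrightarrow>
       p_frobenius 1 [fib i, fib (i+2), fib (i+k)] =
         (if (F i - r * F k) * F (i+2) \<ge> F (k-2) * F i
          then (F i - r * F k - 1) * F (i+2) + (r+1) * F (i+k) - F i
          else (F k - 1) * F (i+2) + r * F (i+k) - F i))"
proof -
  obtain m where im: "i = m + 3" using assms(1) by (metis add.commute le_Suc_ex)
  define u where "u = int (fib (m+1))"
  define v where "v = int (fib (m+2))"
  have u1: "u \<ge> 1" unfolding u_def using fib_pos[of "m+1"] by simp
  have uv: "u \<le> v" unfolding u_def v_def using fib_mono[of "m+1" "m+2"] by simp
  have vu: "v \<le> 2*u"
  proof -
    have "fib (m+2) = fib (m+1) + fib m" using fib_plus_2[of m] by simp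
    moreover have "fib m \<le> fib (m+1)" using fib_mono[of m "m+1"] by simp
    ultimately show ?thesis unfolding u_def v_def by simp
  qed
  have Fi: "F i = u + v" unfolding F_def u_def v_def im fibs3 by simp
  have Fi1: "F (i+1) = u + 2*v" unfolding F_def u_def v_def im fibs3 by simp
  have Fi2: "F (i+2) = 2*u + 3*v" unfolding F_def u_def v_def im fibs3 by simp
  have Fim1: "F (i-1) = v" unfolding F_def v_def im by simp
  have Fim2: "F (i-2) = u" unfolding F_def u_def im by simp
  have cop: "coprime (F (i+2)) (F i)" unfolding F_def by (rule cop_fib)
  have a2: "F i \<ge> 2" using Fi u1 uv by simp
  have ba: "F (i+2) > F i" using Fi Fi2 u1 uv by simp
  have pos: "int (fib j) > 0" if "j \<ge> 1" for j
  proof -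
    have "j > 0" using that by simp
    then have "fib j > 0" by (rule fib_neq_0_nat)
    then show ?thesis by simp
  qed
  have posi: "int (fib i) > 0" "int (fib (i+2)) > 0" using assms(1) by (intro pos; simp)+
  have PA: "k \<ge> i + 2 \<longrightarrow>
       p_frobenius 1 [fib i, fib (i+2), fib (i+k)] = (2 * F i - 1) * F (i+2) - F i"
  proof
    assume ki: "k \<ge> i + 2"
    have "F (i + (i+2)) = F (i+2) * F (i+2) - F i * F i"
      unfolding F_def using fib_shift[of "i+2" i] by simp
    moreover have "F (i + (i+2)) \<le> F (i+k)" unfolding F_def using fib_mono[of "i+(i+2)" "i+k"] ki by simp
    moreover have "(2*u+3*v)*(2*u+3*v) - (u+v)*(u+v) > (2*(u+v) - 1)*(2*u+3*v) - (u+v)"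
    proof -
      have "(2*u+3*v)*(2*u+3*v) - (u+v)*(u+v) - ((2*(u+v) - 1)*(2*u+3*v) - (u+v))
            = 2*(v*v) - u*u + 3*u + 4*v" by (simp add: algebra_simps)
      moreover have "v*v \<ge> u*u" using uv u1 by (intro mult_mono) auto
      moreover have "v*v \<ge> 0" by simp
      ultimately show ?thesis using u1 uv by linarith
    qed
    ultimately have cG: "F (i+k) > (2 * F i - 1) * F (i+2) - F i" using Fi Fi2 by simp
    have cpos: "int (fib (i+k)) > 0" using assms(1) by (intro pos; simp)
    note A = partA[OF a2 ba cop cG]
    show "p_frobenius 1 [fib i, fib (i+2), fib (i+k)] = (2 * F i - 1) * F (i+2) - F i"
      apply (rule frob_char[OF posi cpos])
      using A unfolding F_def by blast+
  qed
  have PB: "p_frobenius 1 [fib i, fib (i+2), fib (2*i+1)]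
       = (F (i-2) - 1) * F (i+2) + F (2*i+1) - F i"
  proof -
    have sh: "F (i + (i+1)) = F (i+1) * F (i+2) - F (i-1) * F i"
      unfolding F_def using fib_shift[of "i+1" i] assms(1) by simp
    have ii: "2*i+1 = i + (i+1)" by simp
    have c: "F (2*i+1) = F i * F (i+2) + F (i-1) * F (i+2) - F (i-1) * F i"
      unfolding ii sh using Fi Fi1 Fim1 by (simp add: algebra_simps)
    have p: "F (i-1) \<ge> 1" "F (i-1) < F i" using Fim1 Fi u1 uv by simp_all
    have pab: "F (i-1) * F i \<le> (F i - F (i-1)) * F (i+2)"
    proof -
      have "v*v \<le> v*(2*u)" using vu uv u1 by (intro mult_left_mono) auto
      moreover have "u*u \<ge> 0" by simp
      moreover have "v*(u+v) = u*v + v*v" "(u+v-v)*(2*u+3*v) = 2*(u*u) + 3*(u*v)" "v*(2*u) = 2*(u*v)"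
        by (simp_all add: algebra_simps)
      ultimately show ?thesis using Fi Fi2 Fim1 by (smt (verit))
    qed
    have cpos: "int (fib (2*i+1)) > 0" by (intro pos; simp)
    note B = partB[OF a2 ba cop p pab c]
    have G: "(F (i-2) - 1) * F (i+2) + F (2*i+1) - F i
           = (2*F i - 1)*F (i+2) - F (i-1) * F i - F i"
      unfolding c using Fi Fim2 Fim1 by (simp add: algebra_simps)
    show ?thesis unfolding G
      apply (rule frob_char[OF posi cpos])
      using B unfolding F_def by blast+
  qed
  have PC: "p_frobenius 1 [fib i, fib (i+2), fib (2*i)]
       = (F i - 1) * F (i+2) + F (2*i) - F i"
  proof -
    have sh: "F (i + i) = F i * F (i+2) - F (i-2) * F i"
      unfolding F_def using fib_shift[of i i] assms(1) by simp
    have ii: "2*i = i + i" by simp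
    have c: "F (2*i) = F i * (F (i+2) - F (i-2))" unfolding ii sh by (simp add: algebra_simps)
    have h: "F (i+2) - F (i-2) \<ge> 1" "F (i+2) - F (i-2) < F (i+2)" using Fi2 Fim2 u1 uv by simp_all
    have cpos: "int (fib (2*i)) > 0" using assms(1) by (intro pos; simp)
    note C = partC[OF a2 ba cop h]
    have G: "(F i - 1) * F (i+2) + F (2*i) - F i
        = (F i - 1) * F (i+2) + F i * (F (i+2) - F (i-2)) - F i" unfolding c ..
    have cc: "int (fib (2*i)) = F i * (F (i+2) - F (i-2))" using c unfolding F_def .
    show ?thesis unfolding G
      apply (rule frob_char[OF posi cpos])
      using C unfolding F_def cc[unfolded F_def] by blast+
  qed
  have PD: "\<forall>r::int. r = (F i - 1) div F k \<longrightarrow> r \<ge> 1 \<longrightarrow>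
       p_frobenius 1 [fib i, fib (i+2), fib (i+k)] =
         (if (F i - r * F k) * F (i+2) \<ge> F (k-2) * F i
          then (F i - r * F k - 1) * F (i+2) + (r+1) * F (i+k) - F i
          else (F k - 1) * F (i+2) + r * F (i+k) - F i)"
  proof (intro allI impI)
    fix r :: int assume r: "r = (F i - 1) div F k" and r1: "r \<ge> 1"
    obtain l where kl: "k = l + 3" using assms(2) by (metis add.commute le_Suc_ex)
    have e1: "F (k-2) \<ge> 1" unfolding F_def kl using fib_pos[of "l+1"] by simp
    have fe: "F k \<ge> 2 * F (k-2)"
    proof -
      have A: "int (fib (l+3)) = int (fib (l+1)) + int (fib (l+2))" by (simp only: fibs3(1) of_nat_add)
      have B: "int (fib (l+1)) \<le> int (fib (l+2))" using fib_mono[of "l+1" "l+2"] by simp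
      have C: "F k = int (fib (l+3))" "F (k-2) = int (fib (l+1))" unfolding F_def kl by simp_all
      show ?thesis using A B C by linarith
    qed
    have fa: "F k \<le> F i - 1"
    proof (rule ccontr)
      assume "\<not> F k \<le> F i - 1"
      then have "(F i - 1) div F k = 0" using a2 by (intro div_pos_pos_trivial) auto
      then show False using r r1 by simp
    qed
    have ef: "F (k-2) \<le> F k" unfolding F_def using fib_mono[of "k-2" k] by simp
    have bae: "F (i+2) \<ge> F i + F (k-2) + 1" using Fi Fi2 ef fa u1 uv by simp
    have c: "F (i+k) = F k * F (i+2) - F (k-2) * F i"
      unfolding F_def using fib_shift[of k i] assms(2) by simp
    interpret P: PDsetup "F i" "F (i+2)" "F k" "F (k-2)" r "F (i+k)"
      by unfold_locales (use a2 bae cop e1 fe fa r r1 c in auto)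
    have cpos: "int (fib (i+k)) > 0" using assms(1) by (intro pos; simp)
    have GV: "(if (F i - r * F k) * F (i+2) \<ge> F (k-2) * F i
          then (F i - r * F k - 1) * F (i+2) + (r+1) * F (i+k) - F i
          else (F k - 1) * F (i+2) + r * F (i+k) - F i) = max P.V1 P.V2 - F i"
    proof -
      have d: "P.V1 - P.V2 = (F i - r * F k) * F (i+2) - F (k-2) * F i"
        unfolding P.V1_def P.V2_def by (simp add: algebra_simps)
      have g1: "(F i - r * F k - 1) * F (i+2) + (r+1) * F (i+k) - F i = P.V1 - F i"
        unfolding P.V1_def c by (simp add: algebra_simps)
      have g2: "(F k - 1) * F (i+2) + r * F (i+k) - F i = P.V2 - F i"
        unfolding P.V2_def c by (simp add: algebra_simps)
      show ?thesis using d g1 g2 by auto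
    qed
    show "p_frobenius 1 [fib i, fib (i+2), fib (i+k)] =
         (if (F i - r * F k) * F (i+2) \<ge> F (k-2) * F i
          then (F i - r * F k - 1) * F (i+2) + (r+1) * F (i+k) - F i
          else (F k - 1) * F (i+2) + r * F (i+k) - F i)"
      unfolding GV
    proof (rule frob_char[OF posi cpos,
          where TT = "if P.V2 \<le> P.V1 then (nat (F (i+2) - (r+1)*F (k-2) - 1), nat (F k - 1), 0)
                      else (nat (F (i+2) - r*F (k-2) - 1), nat ((r+1)*F k - 1 - F i), 0)"])
      fix x y z assume "(x,y,z) \<in> reps3 (int (fib i)) (int (fib (i+2))) (int (fib (i+k))) (max P.V1 P.V2 - F i)"
      then have R: "(x,y,z) \<in> reps3 (F i) (F (i+2)) (F (i+k)) (max P.V1 P.V2 - F i)" unfolding F_def .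
      show "(x,y,z) = (if P.V2 \<le> P.V1 then (nat (F (i+2) - (r+1)*F (k-2) - 1), nat (F k - 1), 0)
                      else (nat (F (i+2) - r*F (k-2) - 1), nat ((r+1)*F k - 1 - F i), 0))"
      proof (cases "P.V2 \<le> P.V1")
        case True then show ?thesis using P.low1 R by (simp add: max_def)
      next
        case False then show ?thesis using P.low2 R by (simp add: max_def)
      qed
    next
      fix n assume "max P.V1 P.V2 - F i < n"
      then show "\<exists>u v. u \<in> reps3 (int (fib i)) (int (fib (i+2))) (int (fib (i+k))) n \<and>
                 v \<in> reps3 (int (fib i)) (int (fib (i+2))) (int (fib (i+k))) n \<and> u \<noteq> v"
        using P.up unfolding F_def by blast
    qed
  qed
  show ?thesis using PA PB PC PD by blast
qed


end
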